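(* Let $\mathcal{M}=\{p(x\mid\theta):\ x\in\mathcal{X},\ \theta\in\Theta\}$ be a model that has a sufficient statistic $t=t(x)\in\mathcal{T}$ for $\theta$, let $\mathcal{P}$ be a class of priors, $\mathbf{X}=(x_1,\dots,x_M)$ data and $\gamma>0$. Let $T=(t(x_1),\dots,t(x_M))\in\mathcal{T}^M$ and let $\mathcal{M}_t=\{p(t\mid\theta):\ t\in\mathcal{T},\ \theta\in\Theta\}$ be the corresponding model in terms of $t$. Then \[ \pi_{\rm er}(\cdot\mid\mathcal{M},\mathcal{P},\mathbf{X},\gamma)=\pi_{\rm er}(\cdot\mid\mathcal{M}_t,\mathcal{P},T,\gamma), \] i.e. a density is an empirical reference prior for $(\mathcal{M},\mathcal{P},\mathbf{X},\gamma)$ if and only if it is one for $(\mathcal{M}_t,\mathcal{P},T,\gamma)$.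
   Context: For a model $\mathcal{N}=\{p(y\mid\theta)\}$ and prior $\pi$: $p(y\mid\pi)=\int p(y\mid\theta)\pi(\theta)\,\mathrm d\theta$; for data $\mathbf{Y}=(y_1,\dots,y_M)$ the marginal likelihood is $L(\pi\mid\mathcal{N},\mathbf{Y})=\prod_{m=1}^M p(y_m\mid\pi)$; $\mathcal{N}^k$ is the model of $k$ independent replications, $p(\vec y\mid\theta)=\prod_{i=1}^k p(y^{(i)}\mid\theta)$; the expected information is $\mathcal{I}[\pi\mid\mathcal{N}]=\int\int\pi(\theta)p(y\mid\theta)\log\big(p(y\mid\theta)/p(y\mid\pi)\big)\,\mathrm dy\,\mathrm d\theta$. A proper probability density $\pi\in\mathcal{P}$ is an empirical reference prior $\pi_{\rm er}(\cdot\mid\mathcal{N},\mathcal{P},\mathbf{Y},\gamma)$ if for every proper probability density $\tilde\pi\in\mathcal{P}$, $\lim_{k\to\infty}\big((\log L(\pi\mid\mathcal{N},\mathbf{Y})+\gamma\mathcal{I}[\pi\mid\mathcal{N}^k])-(\log L(\tilde\pi\mid\mathcal{N},\mathbf{Y})+\gamma\mathcal{I}[\tilde\pi\mid\mathcal{N}^k])\big)\ge 0$. *)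

theory Defs
  imports "HOL-Probability.Probability"
begin

definition eln :: "real \<Rightarrow> ereal" where
  "eln x = (if 0 < x then ereal (ln x) else -\<infinity>)"

definition density_model :: "'y measure \<Rightarrow> 'p measure \<Rightarrow> ('y \<Rightarrow> 'p \<Rightarrow> real) \<Rightarrow> bool" where
  "density_model MY MP p \<longleftrightarrow>
     sigma_finite_measure MY \<and> sigma_finite_measure MP \<and>
     (\<lambda>(y, \<theta>). p y \<theta>) \<in> borel_measurable (MY \<Otimes>\<^sub>M MP) \<and>
     (\<forall>y\<in>space MY. \<forall>\<theta>\<in>space MP. 0 \<le> p y \<theta>) \<and>
     (\<forall>\<theta>\<in>space MP. prob_space (density MY (\<lambda>y. ennreal (p y \<theta>))))"

definition proper_prior :: "'p measure \<Rightarrow> ('p \<Rightarrow> real) \<Rightarrow> bool" where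
  "proper_prior MP \<pi> \<longleftrightarrow>
     \<pi> \<in> borel_measurable MP \<and> (\<forall>\<theta>\<in>space MP. 0 \<le> \<pi> \<theta>) \<and>
     (\<integral>\<^sup>+ \<theta>. ennreal (\<pi> \<theta>) \<partial>MP) = 1"

definition marg :: "'p measure \<Rightarrow> ('y \<Rightarrow> 'p \<Rightarrow> real) \<Rightarrow> ('p \<Rightarrow> real) \<Rightarrow> 'y \<Rightarrow> real" where
  "marg MP p \<pi> y = (\<integral>\<theta>. p y \<theta> * \<pi> \<theta> \<partial>MP)"

definition log_lik :: "'p measure \<Rightarrow> ('y \<Rightarrow> 'p \<Rightarrow> real) \<Rightarrow> ('p \<Rightarrow> real) \<Rightarrow> 'y list \<Rightarrow> ereal" where
  "log_lik MP p \<pi> ys = (\<Sum>y\<leftarrow>ys. eln (marg MP p \<pi> y))"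

definition rep_dens :: "('y \<Rightarrow> 'p \<Rightarrow> real) \<Rightarrow> nat \<Rightarrow> (nat \<Rightarrow> 'y) \<Rightarrow> 'p \<Rightarrow> real" where
  "rep_dens p k ys \<theta> = (\<Prod>i<k. p (ys i) \<theta>)"

definition rep_meas :: "'y measure \<Rightarrow> nat \<Rightarrow> (nat \<Rightarrow> 'y) measure" where
  "rep_meas MY k = PiM {..<k} (\<lambda>_. MY)"

definition exp_info :: "'y measure \<Rightarrow> 'p measure \<Rightarrow> ('y \<Rightarrow> 'p \<Rightarrow> real) \<Rightarrow> ('p \<Rightarrow> real) \<Rightarrow> real" where
  "exp_info MY MP p \<pi> =
     (\<integral>\<theta>. (\<integral>y. \<pi> \<theta> * p y \<theta> * ln (p y \<theta> / marg MP p \<pi> y) \<partial>MY) \<partial>MP)"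

definition erp_objective ::
  "'y measure \<Rightarrow> 'p measure \<Rightarrow> ('y \<Rightarrow> 'p \<Rightarrow> real) \<Rightarrow> 'y list \<Rightarrow> real \<Rightarrow> ('p \<Rightarrow> real) \<Rightarrow> nat \<Rightarrow> ereal" where
  "erp_objective MY MP p ys \<gamma> \<pi> k =
     log_lik MP p \<pi> ys + ereal (\<gamma> * exp_info (rep_meas MY k) MP (rep_dens p k) \<pi>)"

definition is_erp ::
  "'y measure \<Rightarrow> 'p measure \<Rightarrow> ('y \<Rightarrow> 'p \<Rightarrow> real) \<Rightarrow> ('p \<Rightarrow> real) set \<Rightarrow> 'y list \<Rightarrow> real
    \<Rightarrow> ('p \<Rightarrow> real) \<Rightarrow> bool" where
  "is_erp MY MP p P ys \<gamma> \<pi> \<longleftrightarrow>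
     \<pi> \<in> P \<and> proper_prior MP \<pi> \<and>
     (\<forall>\<pi>'\<in>P. proper_prior MP \<pi>' \<longrightarrow>
        (\<exists>l\<ge>0. ((\<lambda>k. erp_objective MY MP p ys \<gamma> \<pi> k - erp_objective MY MP p ys \<gamma> \<pi>' k)
                   \<longlongrightarrow> l) sequentially))"

definition statistic_model ::
  "'x measure \<Rightarrow> 't measure \<Rightarrow> 'p measure \<Rightarrow> ('x \<Rightarrow> 'p \<Rightarrow> real) \<Rightarrow> ('x \<Rightarrow> 't)
    \<Rightarrow> ('t \<Rightarrow> 'p \<Rightarrow> real) \<Rightarrow> bool" where
  "statistic_model MX MT MP p t q \<longleftrightarrow>
     t \<in> MX \<rightarrow>\<^sub>M MT \<and> density_model MT MP q \<and>
     (\<forall>\<theta>\<in>space MP. distr (density MX (\<lambda>x. ennreal (p x \<theta>))) MT t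
                      = density MT (\<lambda>s. ennreal (q s \<theta>)))"

text \<open>t is sufficient: p(x | theta) = p(x | t(x)) p(t(x) | theta), where the conditional
  density p(x | t) = h(x) does not depend on theta.\<close>
definition sufficient_stat ::
  "'x measure \<Rightarrow> 'p measure \<Rightarrow> ('x \<Rightarrow> 'p \<Rightarrow> real) \<Rightarrow> ('x \<Rightarrow> 't) \<Rightarrow> ('t \<Rightarrow> 'p \<Rightarrow> real) \<Rightarrow> bool" where
  "sufficient_stat MX MP p t q \<longleftrightarrow>
     (\<exists>h\<in>borel_measurable MX. (\<forall>x\<in>space MX. 0 \<le> h x) \<and>
        (\<forall>x\<in>space MX. \<forall>\<theta>\<in>space MP. p x \<theta> = h x * q (t x) \<theta>))"

end

theory Submission
  imports Defs
begin

lemma density_PiM_prod: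
  fixes M :: "'a measure" and f :: "'a \<Rightarrow> real"
  assumes sf: "sigma_finite_measure M" and fm[measurable]: "f \<in> borel_measurable M"
    and nn: "\<forall>x\<in>space M. 0 \<le> f x" and ps: "prob_space (density M (\<lambda>x. ennreal (f x)))"
    and fin: "finite I"
  shows "density (PiM I (\<lambda>_. M)) (\<lambda>x. ennreal (\<Prod>i\<in>I. f (x i))) = PiM I (\<lambda>_. density M (\<lambda>x. ennreal (f x)))"
proof -
  interpret N: product_sigma_finite "\<lambda>_. density M (\<lambda>x. ennreal (f x))"
    using prob_space_imp_sigma_finite[OF ps] by (simp add: product_sigma_finite_def)
  interpret S: product_sigma_finite "\<lambda>_. M"
    using sf by (simp add: product_sigma_finite_def)
  show ?thesis
  proof (rule N.PiM_eqI[OF fin])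
    show "sets (density (PiM I (\<lambda>_. M)) (\<lambda>x. ennreal (\<Prod>i\<in>I. f (x i)))) = sets (PiM I (\<lambda>_. density M (\<lambda>x. ennreal (f x))))"
      unfolding sets_density by (intro sets_PiM_cong) simp_all
  next
    fix A assume A: "\<And>i. i \<in> I \<Longrightarrow> A i \<in> sets (density M (\<lambda>x. ennreal (f x)))"
    then have A': "\<And>i. i \<in> I \<Longrightarrow> A i \<in> sets M" by simp
    have PE: "Pi\<^sub>E I A \<in> sets (PiM I (\<lambda>_. M))"
      using A' by (intro sets_PiM_I_finite fin) auto
    have "emeasure (density (PiM I (\<lambda>_. M)) (\<lambda>x. ennreal (\<Prod>i\<in>I. f (x i)))) (Pi\<^sub>E I A)
        = (\<integral>\<^sup>+ x. ennreal (\<Prod>i\<in>I. f (x i)) * indicator (Pi\<^sub>E I A) x \<partial>PiM I (\<lambda>_. M))"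
      using PE by (simp add: emeasure_density)
    also have "\<dots> = (\<integral>\<^sup>+ x. (\<Prod>i\<in>I. ennreal (f (x i)) * indicator (A i) (x i)) \<partial>PiM I (\<lambda>_. M))"
    proof (rule nn_integral_cong)
      fix x assume x: "x \<in> space (PiM I (\<lambda>_. M))"
      then have xi: "\<And>i. i \<in> I \<Longrightarrow> x i \<in> space M" and xe: "x \<in> extensional I"
        by (auto simp: space_PiM PiE_def)
      have "ennreal (\<Prod>i\<in>I. f (x i)) = (\<Prod>i\<in>I. ennreal (f (x i)))"
        using xi nn by (intro prod_ennreal[symmetric]) auto
      moreover have "indicator (Pi\<^sub>E I A) x = (\<Prod>i\<in>I. indicator (A i) (x i) :: ennreal)"
        using xe fin by (auto simp: indicator_def PiE_def Pi_def prod_zero_iff)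
      ultimately show "ennreal (\<Prod>i\<in>I. f (x i)) * indicator (Pi\<^sub>E I A) x = (\<Prod>i\<in>I. ennreal (f (x i)) * indicator (A i) (x i))"
        by (simp add: prod.distrib)
    qed
    also have "\<dots> = (\<Prod>i\<in>I. \<integral>\<^sup>+ y. ennreal (f y) * indicator (A i) y \<partial>M)"
      using A' by (intro S.product_nn_integral_prod fin) auto
    also have "\<dots> = (\<Prod>i\<in>I. emeasure (density M (\<lambda>x. ennreal (f x))) (A i))"
      using A' by (intro prod.cong refl) (simp add: emeasure_density)
    finally show "emeasure (density (PiM I (\<lambda>_. M)) (\<lambda>x. ennreal (\<Prod>i\<in>I. f (x i)))) (Pi\<^sub>E I A) = (\<Prod>i\<in>I. emeasure (density M (\<lambda>x. ennreal (f x))) (A i))" .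
  qed
qed
lemma t1:
  fixes q :: "'t \<Rightarrow> 'p \<Rightarrow> real"
  assumes qm[measurable]: "(\<lambda>(y,\<theta>). q y \<theta>) \<in> borel_measurable (MT \<Otimes>\<^sub>M MP)"
   and pm[measurable]: "\<pi> \<in> borel_measurable MP" and sf: "sigma_finite_measure MP"
  shows "(\<lambda>(s,\<theta>). rep_dens q k s \<theta> * \<pi> \<theta>) \<in> borel_measurable (PiM {..<k} (\<lambda>_. MT) \<Otimes>\<^sub>M MP)"
    and "\<theta> \<in> space MP \<Longrightarrow> (\<lambda>s. rep_dens q k s \<theta>) \<in> borel_measurable (PiM {..<k} (\<lambda>_. MT))"
    and "(\<lambda>s. marg MP (rep_dens q k) \<pi> s) \<in> borel_measurable (PiM {..<k} (\<lambda>_. MT))"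
proof -
  show 1: "(\<lambda>(s,\<theta>). rep_dens q k s \<theta> * \<pi> \<theta>) \<in> borel_measurable (PiM {..<k} (\<lambda>_. MT) \<Otimes>\<^sub>M MP)"
    unfolding rep_dens_def by measurable
  show "\<theta> \<in> space MP \<Longrightarrow> (\<lambda>s. rep_dens q k s \<theta>) \<in> borel_measurable (PiM {..<k} (\<lambda>_. MT))"
    unfolding rep_dens_def by measurable
  interpret sigma_finite_measure MP by (fact sf)
  show "(\<lambda>s. marg MP (rep_dens q k) \<pi> s) \<in> borel_measurable (PiM {..<k} (\<lambda>_. MT))"
    unfolding marg_def using 1 by (intro borel_measurable_lebesgue_integral) simp
qed

lemma exp_info_eq:
  fixes p :: "'x \<Rightarrow> 'p \<Rightarrow> real" and q :: "'t \<Rightarrow> 'p \<Rightarrow> real" and t :: "'x \<Rightarrow> 't"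
  assumes dmX: "density_model MX MP p" and sm: "statistic_model MX MT MP p t q"
    and ss: "sufficient_stat MX MP p t q" and pp: "proper_prior MP \<pi>"
  shows "exp_info (rep_meas MX k) MP (rep_dens p k) \<pi> = exp_info (rep_meas MT k) MP (rep_dens q k) \<pi>"
proof -
  define I where "I = {..<k}"
  define PX where "PX = PiM I (\<lambda>_. MX)"
  define PT where "PT = PiM I (\<lambda>_. MT)"
  define T where "T = compose I t"
  have fin: "finite I" by (simp add: I_def)
  have smd: "t \<in> MX \<rightarrow>\<^sub>M MT \<and> density_model MT MP q \<and>
     (\<forall>\<theta>\<in>space MP. distr (density MX (\<lambda>x. ennreal (p x \<theta>))) MT t
                      = density MT (\<lambda>s. ennreal (q s \<theta>)))"
    using sm unfolding statistic_model_def by assumption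
  have tm[measurable]: "t \<in> MX \<rightarrow>\<^sub>M MT" using smd by (rule conjunct1)
  have dmT: "density_model MT MP q" using smd by (rule conjunct2[THEN conjunct1])
  have tdistr: "distr (density MX (\<lambda>x. ennreal (p x \<theta>))) MT t = density MT (\<lambda>s. ennreal (q s \<theta>))"
    if "\<theta> \<in> space MP" for \<theta>
    using smd[THEN conjunct2, THEN conjunct2] that by (rule bspec)
  have ssd: "\<exists>h\<in>borel_measurable MX. (\<forall>x\<in>space MX. 0 \<le> h x) \<and>
        (\<forall>x\<in>space MX. \<forall>\<theta>\<in>space MP. p x \<theta> = h x * q (t x) \<theta>)"
    using ss unfolding sufficient_stat_def by assumption
  then obtain h where hm[measurable]: "h \<in> borel_measurable MX" and hnn: "\<forall>x\<in>space MX. 0 \<le> h x"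
    and hfac: "\<forall>x\<in>space MX. \<forall>\<theta>\<in>space MP. p x \<theta> = h x * q (t x) \<theta>"
    by (elim bexE conjE)
  have dmXd: "sigma_finite_measure MX \<and> sigma_finite_measure MP \<and>
     (\<lambda>(y, \<theta>). p y \<theta>) \<in> borel_measurable (MX \<Otimes>\<^sub>M MP) \<and>
     (\<forall>y\<in>space MX. \<forall>\<theta>\<in>space MP. 0 \<le> p y \<theta>) \<and>
     (\<forall>\<theta>\<in>space MP. prob_space (density MX (\<lambda>y. ennreal (p y \<theta>))))"
    using dmX unfolding density_model_def by assumption
  then have sfX: "sigma_finite_measure MX" and sfP: "sigma_finite_measure MP"
    and pm[measurable]: "(\<lambda>(y, \<theta>). p y \<theta>) \<in> borel_measurable (MX \<Otimes>\<^sub>M MP)"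
    and pnn: "\<forall>y\<in>space MX. \<forall>\<theta>\<in>space MP. 0 \<le> p y \<theta>"
    and psX: "\<forall>\<theta>\<in>space MP. prob_space (density MX (\<lambda>y. ennreal (p y \<theta>)))"
    by blast+
  have dmTd: "sigma_finite_measure MT \<and> sigma_finite_measure MP \<and>
     (\<lambda>(y, \<theta>). q y \<theta>) \<in> borel_measurable (MT \<Otimes>\<^sub>M MP) \<and>
     (\<forall>y\<in>space MT. \<forall>\<theta>\<in>space MP. 0 \<le> q y \<theta>) \<and>
     (\<forall>\<theta>\<in>space MP. prob_space (density MT (\<lambda>y. ennreal (q y \<theta>))))"
    using dmT unfolding density_model_def by assumption
  then have sfT: "sigma_finite_measure MT"
    and qm[measurable]: "(\<lambda>(y, \<theta>). q y \<theta>) \<in> borel_measurable (MT \<Otimes>\<^sub>M MP)"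
    and qnn: "\<forall>y\<in>space MT. \<forall>\<theta>\<in>space MP. 0 \<le> q y \<theta>"
    and psT: "\<forall>\<theta>\<in>space MP. prob_space (density MT (\<lambda>y. ennreal (q y \<theta>)))"
    by blast+
  have ppd: "\<pi> \<in> borel_measurable MP \<and> (\<forall>\<theta>\<in>space MP. 0 \<le> \<pi> \<theta>) \<and>
     (\<integral>\<^sup>+ \<theta>. ennreal (\<pi> \<theta>) \<partial>MP) = 1"
    using pp unfolding proper_prior_def by assumption
  then have pim[measurable]: "\<pi> \<in> borel_measurable MP" and pinn: "\<forall>\<theta>\<in>space MP. 0 \<le> \<pi> \<theta>"
    by blast+
  define H where "H ys = (\<Prod>i\<in>I. h (ys i))" for ys
  have Tm[measurable]: "T \<in> PX \<rightarrow>\<^sub>M PT"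
    unfolding T_def PX_def PT_def compose_def
  proof (rule measurable_restrict)
    fix i assume i: "i \<in> I"
    show "(\<lambda>x. t (x i)) \<in> PiM I (\<lambda>_. MX) \<rightarrow>\<^sub>M MT"
      using measurable_component_singleton[OF i, of "\<lambda>_. MX"] tm by (rule measurable_compose)
  qed
  have Tsp: "T ys \<in> space PT" if "ys \<in> space PX" for ys
    using Tm that by (rule measurable_space)
  have ysi: "ys i \<in> space MX" if "ys \<in> space PX" "i \<in> I" for ys i
    using that by (auto simp: PX_def space_PiM)
  have Rfac: "rep_dens p k ys \<theta> = H ys * rep_dens q k (T ys) \<theta>"
    if ys: "ys \<in> space PX" and th: "\<theta> \<in> space MP" for ys \<theta>
  proof -
    have "rep_dens p k ys \<theta> = (\<Prod>i\<in>I. h (ys i) * q (t (ys i)) \<theta>)"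
      unfolding rep_dens_def I_def[symmetric] using hfac ysi[OF ys] th by (intro prod.cong) auto
    also have "\<dots> = H ys * rep_dens q k (T ys) \<theta>"
      by (simp add: H_def rep_dens_def I_def[symmetric] prod.distrib T_def compose_def)
    finally show ?thesis .
  qed
  have Mfac: "marg MP (rep_dens p k) \<pi> ys = H ys * marg MP (rep_dens q k) \<pi> (T ys)"
    if ys: "ys \<in> space PX" for ys
  proof -
    have "marg MP (rep_dens p k) \<pi> ys = (\<integral>\<theta>. H ys * (rep_dens q k (T ys) \<theta> * \<pi> \<theta>) \<partial>MP)"
      unfolding marg_def by (intro Bochner_Integration.integral_cong refl) (simp add: Rfac[OF ys])
    also have "\<dots> = H ys * marg MP (rep_dens q k) \<pi> (T ys)"
      by (simp add: marg_def)
    finally show ?thesis .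
  qed
  have inner: "(\<integral>y. \<pi> \<theta> * rep_dens p k y \<theta> * ln (rep_dens p k y \<theta> / marg MP (rep_dens p k) \<pi> y) \<partial>PX)
      = (\<integral>s. \<pi> \<theta> * rep_dens q k s \<theta> * ln (rep_dens q k s \<theta> / marg MP (rep_dens q k) \<pi> s) \<partial>PT)"
    if th: "\<theta> \<in> space MP" for \<theta>
  proof -
    define G where "G s = \<pi> \<theta> * ln (rep_dens q k s \<theta> / marg MP (rep_dens q k) \<pi> s)" for s
    have mm: "(\<lambda>(s,\<theta>). rep_dens q k s \<theta> * \<pi> \<theta>) \<in> borel_measurable (PT \<Otimes>\<^sub>M MP)"
      "(\<lambda>s. rep_dens q k s \<theta>) \<in> borel_measurable PT"
      "(\<lambda>s. marg MP (rep_dens q k) \<pi> s) \<in> borel_measurable PT"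
      unfolding PT_def I_def
        apply (rule t1(1)[OF qm pim sfP])
       apply (rule t1(2)[OF qm pim sfP th])
      apply (rule t1(3)[OF qm pim sfP])
      done
    have Gm[measurable]: "G \<in> borel_measurable PT"
      unfolding G_def using mm(2,3) by measurable
    have Rpm[measurable]: "(\<lambda>ys. rep_dens p k ys \<theta>) \<in> borel_measurable PX"
      unfolding rep_dens_def PX_def I_def using th by measurable
    have Rpnn: "0 \<le> rep_dens p k ys \<theta>" if "ys \<in> space PX" for ys
      unfolding rep_dens_def using pnn ysi[OF that] th by (intro prod_nonneg) (auto simp: I_def)
    have Rqnn: "0 \<le> rep_dens q k s \<theta>" if "s \<in> space PT" for s
      unfolding rep_dens_def using qnn that th by (intro prod_nonneg) (auto simp: I_def PT_def space_PiM)
    define DX where "DX = density MX (\<lambda>x. ennreal (p x \<theta>))"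
    define DT where "DT = density MT (\<lambda>x. ennreal (q x \<theta>))"
    have psDX: "prob_space DX" and psDT: "prob_space DT"
      using psX psT th by (auto simp: DX_def DT_def)
    have dPX: "density PX (\<lambda>ys. ennreal (rep_dens p k ys \<theta>)) = PiM I (\<lambda>_. DX)"
      unfolding PX_def DX_def rep_dens_def I_def[symmetric]
      using density_PiM_prod[OF sfX _ _ _ fin, of "\<lambda>x. p x \<theta>"] th pnn psX by auto
    have dPT: "density PT (\<lambda>s. ennreal (rep_dens q k s \<theta>)) = PiM I (\<lambda>_. DT)"
      unfolding PT_def DT_def rep_dens_def I_def[symmetric]
      using density_PiM_prod[OF sfT _ _ _ fin, of "\<lambda>x. q x \<theta>"] th qnn psT by auto
    have tm': "t \<in> DX \<rightarrow>\<^sub>M DT"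
      unfolding DX_def DT_def by (simp add: measurable_cong_sets[OF sets_density sets_density])
    have dd: "distr DX DT t = DT"
    proof -
      have "distr DX DT t = distr DX MT t"
        by (rule distr_cong) (auto simp: DT_def)
      also have "\<dots> = DT" using tdistr[OF th] by (simp add: DX_def DT_def)
      finally show ?thesis .
    qed
    have distrT: "distr (density PX (\<lambda>ys. ennreal (rep_dens p k ys \<theta>))) PT T
        = density PT (\<lambda>s. ennreal (rep_dens q k s \<theta>))"
    proof -
      have "distr (density PX (\<lambda>ys. ennreal (rep_dens p k ys \<theta>))) PT T = distr (PiM I (\<lambda>_. DX)) (PiM I (\<lambda>_. DT)) (compose I t)"
        unfolding dPX T_def PT_def
        by (rule distr_cong) (auto intro!: sets_PiM_cong simp: DT_def)
      also have "\<dots> = PiM I (\<lambda>_. distr DX DT t)"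
        using fin psDX psDT tm' by (intro distr_PiM_finite_prob_space') auto
      also have "\<dots> = density PT (\<lambda>s. ennreal (rep_dens q k s \<theta>))"
        unfolding dd dPT ..
      finally show ?thesis .
    qed
    have "(\<integral>y. \<pi> \<theta> * rep_dens p k y \<theta> * ln (rep_dens p k y \<theta> / marg MP (rep_dens p k) \<pi> y) \<partial>PX)
        = (\<integral>y. rep_dens p k y \<theta> *\<^sub>R G (T y) \<partial>PX)"
    proof (intro Bochner_Integration.integral_cong refl)
      fix y assume y: "y \<in> space PX"
      show "\<pi> \<theta> * rep_dens p k y \<theta> * ln (rep_dens p k y \<theta> / marg MP (rep_dens p k) \<pi> y) = rep_dens p k y \<theta> *\<^sub>R G (T y)"
      proof (cases "H y = 0")
        case True then show ?thesis by (simp add: Rfac[OF y th])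
      next
        case False
        then have "rep_dens p k y \<theta> / marg MP (rep_dens p k) \<pi> y = rep_dens q k (T y) \<theta> / marg MP (rep_dens q k) \<pi> (T y)"
          by (simp add: Rfac[OF y th] Mfac[OF y])
        then show ?thesis by (simp add: G_def)
      qed
    qed
    also have "\<dots> = (\<integral>y. G (T y) \<partial>density PX (\<lambda>ys. ennreal (rep_dens p k ys \<theta>)))"
      using Rpnn by (intro integral_density[symmetric]) auto
    also have "\<dots> = (\<integral>s. G s \<partial>distr (density PX (\<lambda>ys. ennreal (rep_dens p k ys \<theta>))) PT T)"
      by (intro integral_distr[symmetric]) auto
    also have "\<dots> = (\<integral>s. G s \<partial>density PT (\<lambda>s. ennreal (rep_dens q k s \<theta>)))"
      unfolding distrT ..
    also have "\<dots> = (\<integral>s. rep_dens q k s \<theta> *\<^sub>R G s \<partial>PT)"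
      using Rqnn mm(2) by (intro integral_density) auto
    also have "\<dots> = (\<integral>s. \<pi> \<theta> * rep_dens q k s \<theta> * ln (rep_dens q k s \<theta> / marg MP (rep_dens q k) \<pi> s) \<partial>PT)"
      by (intro Bochner_Integration.integral_cong refl) (simp add: G_def)
    finally show ?thesis .
  qed
  show ?thesis
    unfolding exp_info_def rep_meas_def I_def[symmetric] PX_def[symmetric] PT_def[symmetric]
    by (intro Bochner_Integration.integral_cong refl inner)
qed

lemma ereal_shift_minus: "(ereal c + a) - (ereal c + b) = a - (b::ereal)"
  by (cases a; cases b) simp_all

lemma eln_mult:
  assumes "0 < c" "0 \<le> m"
  shows "eln (c * m) = ereal (ln c) + eln m"
proof (cases "m = 0")
  case True then show ?thesis by (simp add: eln_def)
next
  case False then have "0 < m" using assms by simp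
  then show ?thesis using assms by (simp add: eln_def ln_mult)
qed

theorem theorem4:
  fixes MX :: "'x measure" and MT :: "'t measure" and MP :: "'p measure"
    and p :: "'x \<Rightarrow> 'p \<Rightarrow> real" and t :: "'x \<Rightarrow> 't" and q :: "'t \<Rightarrow> 'p \<Rightarrow> real"
    and P :: "('p \<Rightarrow> real) set" and xs :: "'x list" and \<gamma> :: real and \<pi> :: "'p \<Rightarrow> real"
  assumes "density_model MX MP p"
    and "statistic_model MX MT MP p t q"
    and "sufficient_stat MX MP p t q"
    and "\<gamma> > 0"
    and "set xs \<subseteq> space MX"
    and "\<forall>x\<in>set xs. \<exists>\<theta>\<in>space MP. 0 < p x \<theta>"
  shows "is_erp MX MP p P xs \<gamma> \<pi> \<longleftrightarrow> is_erp MT MP q P (map t xs) \<gamma> \<pi>"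
proof -
  note dmX = assms(1) and sm = assms(2) and ss = assms(3)
  have smd: "t \<in> MX \<rightarrow>\<^sub>M MT \<and> density_model MT MP q \<and>
     (\<forall>\<theta>\<in>space MP. distr (density MX (\<lambda>x. ennreal (p x \<theta>))) MT t
                      = density MT (\<lambda>s. ennreal (q s \<theta>)))"
    using sm unfolding statistic_model_def by assumption
  have tm: "t \<in> MX \<rightarrow>\<^sub>M MT" using smd by (rule conjunct1)
  have dmT: "density_model MT MP q" using smd by (rule conjunct2[THEN conjunct1])
  have ssd: "\<exists>h\<in>borel_measurable MX. (\<forall>x\<in>space MX. 0 \<le> h x) \<and>
        (\<forall>x\<in>space MX. \<forall>\<theta>\<in>space MP. p x \<theta> = h x * q (t x) \<theta>)"
    using ss unfolding sufficient_stat_def by assumption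
  then obtain h where hnn: "\<forall>x\<in>space MX. 0 \<le> h x"
    and hfac: "\<forall>x\<in>space MX. \<forall>\<theta>\<in>space MP. p x \<theta> = h x * q (t x) \<theta>"
    by (elim bexE conjE)
  have dmTd: "sigma_finite_measure MT \<and> sigma_finite_measure MP \<and>
     (\<lambda>(y, \<theta>). q y \<theta>) \<in> borel_measurable (MT \<Otimes>\<^sub>M MP) \<and>
     (\<forall>y\<in>space MT. \<forall>\<theta>\<in>space MP. 0 \<le> q y \<theta>) \<and>
     (\<forall>\<theta>\<in>space MP. prob_space (density MT (\<lambda>y. ennreal (q y \<theta>))))"
    using dmT unfolding density_model_def by assumption
  then have qnn: "\<forall>y\<in>space MT. \<forall>\<theta>\<in>space MP. 0 \<le> q y \<theta>"
    by blast
  have hpos: "0 < h x" if x: "x \<in> set xs" for x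
  proof -
    have xs: "x \<in> space MX" using x assms(5) by blast
    obtain \<theta> where th: "\<theta> \<in> space MP" "0 < p x \<theta>" using x assms(6) by blast
    then have "h x \<noteq> 0" using hfac xs by force
    then show ?thesis using hnn xs by force
  qed
  have margfac: "marg MP p \<pi>' x = h x * marg MP q \<pi>' (t x)" if x: "x \<in> space MX" for x \<pi>'
  proof -
    have "marg MP p \<pi>' x = (\<integral>\<theta>. h x * (q (t x) \<theta> * \<pi>' \<theta>) \<partial>MP)"
      unfolding marg_def using hfac x by (intro Bochner_Integration.integral_cong refl) simp
    then show ?thesis by (simp add: marg_def)
  qed
  have margnn: "0 \<le> marg MP q \<pi>' (t x)"
    if x: "x \<in> space MX" and pp: "proper_prior MP \<pi>'" for x \<pi>'
  proof -
    have tx: "t x \<in> space MT" using tm x by (rule measurable_space)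
    have "\<forall>\<theta>\<in>space MP. 0 \<le> \<pi>' \<theta>" using pp unfolding proper_prior_def by blast
    then show ?thesis unfolding marg_def using qnn tx
      by (intro Bochner_Integration.integral_nonneg) simp
  qed
  define C where "C = (\<Sum>x\<leftarrow>xs. ln (h x))"
  have loglik: "log_lik MP p \<pi>' xs = ereal C + log_lik MP q \<pi>' (map t xs)"
    if pp: "proper_prior MP \<pi>'" for \<pi>'
  proof -
    have "set ys \<subseteq> set xs \<Longrightarrow> (\<Sum>y\<leftarrow>ys. eln (marg MP p \<pi>' y)) = ereal (\<Sum>x\<leftarrow>ys. ln (h x)) + (\<Sum>y\<leftarrow>map t ys. eln (marg MP q \<pi>' y))" for ys
    proof (induction ys)
      case Nil then show ?case by simp
    next
      case (Cons y ys)
      have y: "y \<in> set xs" using Cons.prems by simp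
      have yX: "y \<in> space MX" using y assms(5) by blast
      have "eln (marg MP p \<pi>' y) = ereal (ln (h y)) + eln (marg MP q \<pi>' (t y))"
        unfolding margfac[OF yX] using hpos[OF y] margnn[OF yX pp] by (rule eln_mult)
      moreover have "ereal (\<Sum>x\<leftarrow>y#ys. ln (h x)) = ereal (ln (h y)) + ereal (\<Sum>x\<leftarrow>ys. ln (h x))"
        by simp
      moreover have "(\<Sum>y\<leftarrow>ys. eln (marg MP p \<pi>' y)) = ereal (\<Sum>x\<leftarrow>ys. ln (h x)) + (\<Sum>y\<leftarrow>map t ys. eln (marg MP q \<pi>' y))"
        using Cons by simp
      ultimately show ?case
        by (simp only: list.map sum_list.Cons ac_simps)
    qed
    then show ?thesis unfolding log_lik_def C_def by simp
  qed
  have key: "erp_objective MX MP p xs \<gamma> \<pi>1 k - erp_objective MX MP p xs \<gamma> \<pi>2 k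
      = erp_objective MT MP q (map t xs) \<gamma> \<pi>1 k - erp_objective MT MP q (map t xs) \<gamma> \<pi>2 k"
    if p1: "proper_prior MP \<pi>1" and p2: "proper_prior MP \<pi>2" for \<pi>1 \<pi>2 k
    unfolding erp_objective_def loglik[OF p1] loglik[OF p2]
      exp_info_eq[OF dmX sm ss p1] exp_info_eq[OF dmX sm ss p2]
    by (simp only: add.assoc ereal_shift_minus)
  show ?thesis
  proof
    assume e: "is_erp MX MP p P xs \<gamma> \<pi>"
    then have pp: "proper_prior MP \<pi>" by (simp add: is_erp_def)
    show "is_erp MT MP q P (map t xs) \<gamma> \<pi>"
      using e key[OF pp] unfolding is_erp_def by auto
  next
    assume e: "is_erp MT MP q P (map t xs) \<gamma> \<pi>"
    then have pp: "proper_prior MP \<pi>" by (simp add: is_erp_def)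
    show "is_erp MX MP p P xs \<gamma> \<pi>"
      using e key[OF pp] unfolding is_erp_def by auto
  qed
qed
end
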